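(* Let $x,y\in\mathbb{R}[X]$ be nonzero polynomials with $\deg x=\deg y$. (a) If either $y(u)>0$ for every real root $u$ of $x$, or $y(u)<0$ for every real root $u$ of $x$, then there exists $\beta\in\Gamma$ such that $\delta=x^2+y\beta\in\Gamma^+$ and $\deg x-1\le\deg\beta\le\deg x=\deg\delta/2$. (b) If either $x(z)>0$ for every real root $z$ of $y$, or $x(z)<0$ for every real root $z$ of $y$, then there exists $\eta\in\Gamma$ such that $\delta=x\eta+y^2\in\Gamma^+$ and $\deg y-1\le\deg\eta\le\deg y=\deg\delta/2$.
   Context: $\Gamma$ denotes the set of polynomials in $\mathbb{R}[X]$ having no real root (nonzero constants included), and $\Gamma^+=\{f\in\mathbb{R}[X] : f(r)>0 \text{ for all } r\in\mathbb{R}\}$. *)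

theory Defs
  imports "HOL-Computational_Algebra.Polynomial"
begin

definition Gamma :: "real poly set" where
  "Gamma = {f. \<forall>r::real. poly f r \<noteq> 0}"

definition Gamma_plus :: "real poly set" where
  "Gamma_plus = {f. \<forall>r::real. poly f r > 0}"

end

theory Submission
  imports Defs
begin

lemma poly_big_pos:
  fixes p :: "real poly"
  assumes lc: "lead_coeff p > 0" and ev: "even (degree p)"
  shows "\<exists>R>0. \<forall>t. \<bar>t\<bar> \<ge> R \<longrightarrow> poly p t > 0"
proof -
  obtain R1 where R1: "\<forall>t\<ge>R1. poly p t \<ge> lead_coeff p" using poly_pinfty_gt_lc[OF lc] by blast
  define p' where "p' = pcompose p [:0,-1:]"
  have "lead_coeff p' = lead_coeff p * (-1) ^ degree p"
    unfolding p'_def by (subst lead_coeff_comp) auto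
  with ev lc have lc': "lead_coeff p' > 0" by simp
  obtain R2 where R2: "\<forall>t\<ge>R2. poly p' t \<ge> lead_coeff p'" using poly_pinfty_gt_lc[OF lc'] by blast
  have pp: "poly p' t = poly p (-t)" for t unfolding p'_def by (simp add: poly_pcompose)
  show ?thesis
  proof (intro exI[of _ "max 1 (max \<bar>R1\<bar> \<bar>R2\<bar>)"] conjI allI impI)
    fix t :: real assume t: "max 1 (max \<bar>R1\<bar> \<bar>R2\<bar>) \<le> \<bar>t\<bar>"
    show "poly p t > 0"
    proof (cases "t \<ge> 0")
      case True then have "t \<ge> R1" using t by linarith
      then show ?thesis using R1 lc by force
    next
      case False then have "-t \<ge> R2" using t by linarith
      then have "poly p' (-t) > 0" using R2 lc' by force
      then show ?thesis by (simp add: pp)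
    qed
  qed simp
qed

lemma mainA:
  fixes x y :: "real poly"
  assumes x0: "x \<noteq> 0" and y0: "y \<noteq> 0" and deg: "degree x = degree y"
    and pos: "\<forall>u. poly x u = 0 \<longrightarrow> poly y u > 0"
  shows "\<exists>\<beta>\<in>Gamma. x^2 + y * \<beta> \<in> Gamma_plus \<and>
              degree x - 1 \<le> degree \<beta> \<and> degree \<beta> \<le> degree x \<and>
              2 * degree x = degree (x^2 + y * \<beta>)"
proof -
  define n where "n = degree x"
  define k where "k = n div 2"
  define q :: "real poly" where "q = [:1,0,1:]^k"
  have polyq: "poly q t = (1 + t*t)^k" for t unfolding q_def by (simp add: poly_power)
  have qpos: "poly q t > 0" for t unfolding polyq by (simp add: add_pos_nonneg)
  have degq: "degree q = 2*k" unfolding q_def by (simp add: degree_power_eq)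
  have q0: "q \<noteq> 0" using qpos[of 0] by auto
  define f where "f = x^2"
  define g where "g = y * q"
  have degf: "degree f = 2*n" unfolding f_def n_def by (simp add: degree_power_eq x0)
  have degg: "degree g \<le> 2*n" unfolding g_def using degree_mult_le[of y q] degq deg n_def k_def
    by linarith
  define a where "a = lead_coeff x ^ 2"
  have a0: "a > 0" unfolding a_def using x0 by simp
  have cf: "coeff f (2*n) = a" unfolding f_def a_def n_def
    by (metis degf f_def lead_coeff_power n_def)
  define c where "c = coeff g (2*n)"
  define \<epsilon>0 where "\<epsilon>0 = a / (2*(\<bar>c\<bar>+1))"
  have e00: "\<epsilon>0 > 0" unfolding \<epsilon>0_def using a0 by (simp add: add_pos_nonneg)
  have good: "degree (f + smult e g) = 2*n \<and> lead_coeff (f + smult e g) > 0"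
    if e: "0 < e" "e \<le> \<epsilon>0" for e
  proof -
    have "\<bar>e*c\<bar> \<le> \<epsilon>0 * \<bar>c\<bar>" using e by (simp add: abs_mult mult_right_mono)
    also have "\<epsilon>0 * \<bar>c\<bar> < a" unfolding \<epsilon>0_def using a0
      by (simp add: field_simps add_pos_nonneg) (simp add: add_nonneg_pos)
    finally have co: "coeff (f + smult e g) (2*n) > 0" using cf c_def by auto
    have "degree (f + smult e g) \<le> 2*n"
      using degree_add_le[of f "2*n" "smult e g"] degf degg degree_smult_le[of e g] by linarith
    moreover have "degree (f + smult e g) \<ge> 2*n"
      using co by (intro le_degree) simp
    ultimately show ?thesis using co by simp
  qed
  define p0 where "p0 = f + smult \<epsilon>0 g"
  from good[OF e00 order_refl] have "degree p0 = 2*n" "lead_coeff p0 > 0" unfolding p0_def by auto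
  then obtain R where R: "R > 0" "\<forall>t. \<bar>t\<bar> \<ge> R \<longrightarrow> poly p0 t > 0"
    using poly_big_pos[of p0] by auto
  define h where "h t = poly f t + max (poly g t) 0" for t
  have cont: "continuous_on {-R..R} h" unfolding h_def by (intro continuous_intros)
  obtain t0 where t0: "t0 \<in> {-R..R}" "\<forall>t\<in>{-R..R}. h t0 \<le> h t"
    using continuous_attains_inf[OF compact_Icc _ cont] R by auto
  have hpos: "h t > 0" for t
  proof (cases "poly x t = 0")
    case True
    then have "poly g t > 0" using pos qpos unfolding g_def by simp
    then show ?thesis unfolding h_def f_def by (simp add: add_nonneg_pos)
  next
    case False
    then have "poly f t > 0" unfolding f_def by simp
    then show ?thesis unfolding h_def by simp
  qed
  define m where "m = h t0"
  have m0: "m > 0" using hpos m_def by simp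
  have contg: "continuous_on {-R..R} (\<lambda>t. \<bar>poly g t\<bar>)" by (intro continuous_intros)
  obtain t1 where t1: "t1 \<in> {-R..R}" "\<forall>t\<in>{-R..R}. \<bar>poly g t\<bar> \<le> \<bar>poly g t1\<bar>"
    using continuous_attains_sup[OF compact_Icc _ contg] R by auto
  define G where "G = \<bar>poly g t1\<bar>"
  define e where "e = min \<epsilon>0 (m / (G+1))"
  have e0: "e > 0" unfolding e_def using e00 m0 by (simp add: G_def add_nonneg_pos)
  have ele: "e \<le> \<epsilon>0" unfolding e_def by simp
  have eG: "e * G < m"
  proof -
    have "e * G \<le> m/(G+1) * G" unfolding e_def G_def by (intro mult_right_mono) auto
    also have "\<dots> < m" using m0 by (simp add: G_def field_simps)
    finally show ?thesis .
  qed
  have allpos: "poly f t + e * poly g t > 0" for t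
  proof (cases "\<bar>t\<bar> \<ge> R")
    case True
    have fnn: "poly f t \<ge> 0" unfolding f_def by simp
    have "poly f t + e * poly g t = (1 - e/\<epsilon>0) * poly f t + (e/\<epsilon>0) * poly p0 t"
      unfolding p0_def using e00 by (simp add: field_simps)
    moreover have "(1 - e/\<epsilon>0) * poly f t \<ge> 0" using ele e00 fnn by simp
    moreover have "(e/\<epsilon>0) * poly p0 t > 0" using R True e0 e00 by simp
    ultimately show ?thesis by linarith
  next
    case False
    then have tin: "t \<in> {-R..R}" by auto
    show ?thesis
    proof (cases "poly g t \<ge> 0")
      case True
      show ?thesis
      proof (cases "poly x t = 0")
        case True
        then have "poly g t > 0" using pos qpos unfolding g_def by simp
        then show ?thesis using e0 unfolding f_def by (simp add: add_nonneg_pos)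
      next
        case False
        then have "poly f t > 0" unfolding f_def by simp
        then show ?thesis using True e0 by (simp add: add_pos_nonneg)
      qed
    next
      case False
      then have "h t = poly f t" unfolding h_def by simp
      with t0 tin m_def have "poly f t \<ge> m" by (metis)
      moreover have "\<bar>poly g t\<bar> \<le> G" using t1 tin G_def by auto
      then have "e * \<bar>poly g t\<bar> \<le> e * G" using e0 by (simp add: mult_left_mono)
      ultimately show ?thesis using eG False e0 by (simp add: abs_if split: if_splits)
    qed
  qed
  define \<beta> where "\<beta> = smult e q"
  have eq: "x^2 + y * \<beta> = f + smult e g" unfolding \<beta>_def f_def g_def by simp
  have degb: "degree \<beta> = 2*k" unfolding \<beta>_def using e0 degq by simp
  show ?thesis
  proof (intro bexI[of _ \<beta>] conjI)
    show "\<beta> \<in> Gamma" unfolding Gamma_def \<beta>_def using e0 qpos by (simp add: less_imp_neq[symmetric])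
    show "x^2 + y * \<beta> \<in> Gamma_plus" unfolding Gamma_plus_def eq using allpos by simp
    show "degree x - 1 \<le> degree \<beta>" using degb k_def n_def by simp
    show "degree \<beta> \<le> degree x" using degb k_def n_def by simp
    show "2 * degree x = degree (x^2 + y * \<beta>)" unfolding eq using good[OF e0 ele] n_def by simp
  qed
qed

lemma mainA':
  fixes x y :: "real poly"
  assumes x0: "x \<noteq> 0" and y0: "y \<noteq> 0" and deg: "degree x = degree y"
    and pos: "(\<forall>u. poly x u = 0 \<longrightarrow> poly y u > 0) \<or> (\<forall>u. poly x u = 0 \<longrightarrow> poly y u < 0)"
  shows "\<exists>\<beta>\<in>Gamma. x^2 + y * \<beta> \<in> Gamma_plus \<and>
              degree x - 1 \<le> degree \<beta> \<and> degree \<beta> \<le> degree x \<and>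
              2 * degree x = degree (x^2 + y * \<beta>)"
  using pos
proof
  assume "\<forall>u. poly x u = 0 \<longrightarrow> poly y u > 0"
  then show ?thesis using mainA[OF x0 y0 deg] by blast
next
  assume "\<forall>u. poly x u = 0 \<longrightarrow> poly y u < 0"
  then have "\<forall>u. poly x u = 0 \<longrightarrow> poly (-y) u > 0" by simp
  from mainA[OF x0 _ _ this] y0 deg obtain \<beta> where b: "\<beta>\<in>Gamma" "x^2 + (-y) * \<beta> \<in> Gamma_plus"
    "degree x - 1 \<le> degree \<beta>" "degree \<beta> \<le> degree x"
    "2 * degree x = degree (x^2 + (-y) * \<beta>)" by auto
  have "x^2 + (-y) * \<beta> = x^2 + y * (-\<beta>)" by simp
  moreover have "-\<beta> \<in> Gamma" using b(1) unfolding Gamma_def by simp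
  ultimately show ?thesis using b by (metis degree_minus)
qed

theorem lemma3p2:
  fixes x y :: "real poly"
  assumes "x \<noteq> 0" and "y \<noteq> 0" and "degree x = degree y"
  shows "(((\<forall>u. poly x u = 0 \<longrightarrow> poly y u > 0) \<or> (\<forall>u. poly x u = 0 \<longrightarrow> poly y u < 0)) \<longrightarrow>
           (\<exists>\<beta>\<in>Gamma. x^2 + y * \<beta> \<in> Gamma_plus \<and>
              degree x - 1 \<le> degree \<beta> \<and> degree \<beta> \<le> degree x \<and>
              2 * degree x = degree (x^2 + y * \<beta>))) \<and>
         (((\<forall>z. poly y z = 0 \<longrightarrow> poly x z > 0) \<or> (\<forall>z. poly y z = 0 \<longrightarrow> poly x z < 0)) \<longrightarrow>
           (\<exists>\<eta>\<in>Gamma. x * \<eta> + y^2 \<in> Gamma_plus \<and>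
              degree y - 1 \<le> degree \<eta> \<and> degree \<eta> \<le> degree y \<and>
              2 * degree y = degree (x * \<eta> + y^2)))"
proof (intro conjI impI)
  assume "(\<forall>u. poly x u = 0 \<longrightarrow> poly y u > 0) \<or> (\<forall>u. poly x u = 0 \<longrightarrow> poly y u < 0)"
  then show "\<exists>\<beta>\<in>Gamma. x^2 + y * \<beta> \<in> Gamma_plus \<and>
              degree x - 1 \<le> degree \<beta> \<and> degree \<beta> \<le> degree x \<and>
              2 * degree x = degree (x^2 + y * \<beta>)" using mainA' assms by blast
next
  assume "(\<forall>z. poly y z = 0 \<longrightarrow> poly x z > 0) \<or> (\<forall>z. poly y z = 0 \<longrightarrow> poly x z < 0)"
  from mainA'[OF assms(2,1) assms(3)[symmetric] this] show
    "\<exists>\<eta>\<in>Gamma. x * \<eta> + y^2 \<in> Gamma_plus \<and>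
              degree y - 1 \<le> degree \<eta> \<and> degree \<eta> \<le> degree y \<and>
              2 * degree y = degree (x * \<eta> + y^2)"
    by (simp add: add.commute)
qed

end
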